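(* For every integer $k\ge 1$ and real $\zeta\in(0,1)$ there exists $\alpha_0=\alpha_0(k,\zeta)>0$ such that the following holds for every $\alpha\in(0,\alpha_0)$ and all positive integers $n,t$ with $n\ge 8k^4$, $t\ge n/(2k^3)$ and $t+1<(1-\zeta)n/k$. Let $X=\{x_1,\ldots,x_{t+1}\}$ be disjoint from $[n]$, and let $H$ be a $(1,k)$-partite $(k+1)$-graph with partition classes $X,[n]$. If every vertex of $H$ is $\alpha$-good with respect to $\mathcal{F}_{t+1}(k,n;t)$, then $\nu(H)\ge t$, and if $\nu(H)=t$ then $H$ is a subgraph of $\mathcal{F}_{t+1}(k,n;t)$ (i.e. every edge of $H$ meets $[t]$).
   Context: A $(k+1)$-graph is a pair $(V,E)$ with $E$ a family of $(k+1)$-subsets of $V$; $\nu(H)$ is the maximum number of pairwise disjoint edges of $H$. Given disjoint sets $Q,V$, a $(k+1)$-graph with vertex set $Q\cup V$ is $(1,k)$-partite with partition classes $Q,V$ if every edge $e$ satisfies $|e\cap Q|=1$ and $|e\cap V|=k$. $\mathcal{F}_{t+1}(k,n;t)$ denotes the $(1,k)$-partite $(k+1)$-graph with partition classes $X=\{x_1,\ldots,x_{t+1}\}$ and $[n]$ whose edges are all sets $\{x_i\}\cup e$ with $i\in[t+1]$, $e\in\binom{[n]}{k}$ and $e\cap[t]\ne\emptyset$. For a $(k+1)$-graph $G$ and a vertex $v$, $N_G(v)=\{S: |S|=k,\ S\cup\{v\}\in E(G)\}$. For $0<\alpha<1$, a vertex $v$ of $H$ (where $H$ has the same vertex set as $\mathcal{F}_{t+1}(k,n;t)$)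 is $\alpha$-good with respect to $\mathcal{F}_{t+1}(k,n;t)$ if $|N_{\mathcal{F}_{t+1}(k,n;t)}(v)\setminus N_H(v)|\le\alpha n^k$. *)

theory Defs
  imports Main Complex_Main
begin

text \<open>Vertices: X = {Inl 1, ..., Inl (t+1)} (x_i is Inl i), and [n] = {Inr 1, ..., Inr n}.\<close>

type_synonym vert = "nat + nat"

definition Xset :: "nat \<Rightarrow> vert set" where
  "Xset t = Inl ` {1..t+1}"

definition Nset :: "nat \<Rightarrow> vert set" where
  "Nset n = Inr ` {1..n}"

definition one_k_partite :: "nat \<Rightarrow> vert set \<Rightarrow> vert set \<Rightarrow> vert set set \<Rightarrow> bool" where
  "one_k_partite k Q V E \<longleftrightarrow> Q \<inter> V = {} \<and>
     (\<forall>e\<in>E. e \<subseteq> Q \<union> V \<and> card (e \<inter> Q) = 1 \<and> card (e \<inter> V) = k \<and> finite e)"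

definition F_edges :: "nat \<Rightarrow> nat \<Rightarrow> nat \<Rightarrow> vert set set" where
  "F_edges k n t = {insert (Inl i) e | i e. i \<in> {1..t+1} \<and> e \<subseteq> Nset n \<and> card e = k
                     \<and> e \<inter> Inr ` {1..t} \<noteq> {}}"

definition nbhd :: "nat \<Rightarrow> vert set set \<Rightarrow> vert \<Rightarrow> vert set set" where
  "nbhd k E v = {S. card S = k \<and> finite S \<and> v \<notin> S \<and> insert v S \<in> E}"

definition alpha_good :: "real \<Rightarrow> nat \<Rightarrow> nat \<Rightarrow> nat \<Rightarrow> vert set set \<Rightarrow> vert \<Rightarrow> bool" where
  "alpha_good \<alpha> k n t E v \<longleftrightarrow>
     real (card (nbhd k (F_edges k n t) v - nbhd k E v)) \<le> \<alpha> * real n ^ k"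

definition matching :: "vert set set \<Rightarrow> vert set set \<Rightarrow> bool" where
  "matching E M \<longleftrightarrow> M \<subseteq> E \<and> finite M \<and> (\<forall>e\<in>M. \<forall>f\<in>M. e \<noteq> f \<longrightarrow> e \<inter> f = {})"

definition matching_number :: "vert set set \<Rightarrow> nat" where
  "matching_number E = Max {card M | M. matching E M}"

end

theory Submission
  imports Defs
begin

lemma pairing:
  fixes G :: "'a \<Rightarrow> 'b \<Rightarrow> bool" and D :: real
  assumes finA0: "finite A0" and finB: "finite B" and cardAB: "card A0 \<le> card B"
    and cardB: "real (card B) > 3*D"
    and badA: "\<forall>a\<in>A0. real (card {b\<in>B. \<not> G a b}) \<le> D"
    and badB: "\<forall>b\<in>B. real (card {a\<in>A0. \<not> G a b}) \<le> D"
  shows "\<exists>f. inj_on f A0 \<and> f ` A0 \<subseteq> B \<and> (\<forall>a\<in>A0. G a (f a))"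
proof -
  have "finite A \<Longrightarrow> A \<subseteq> A0 \<Longrightarrow> \<exists>f. inj_on f A \<and> f ` A \<subseteq> B \<and> (\<forall>a\<in>A. G a (f a))" for A
  proof (induction A rule: finite_induct)
    case empty then show ?case by auto
  next
    case (insert a A)
    then obtain f where f: "inj_on f A" "f ` A \<subseteq> B" "\<forall>a\<in>A. G a (f a)" by auto
    have aA0: "a \<in> A0" and AA0: "A \<subseteq> A0" using insert by auto
    have finA: "finite A" by fact
    have cardfA: "card (f ` A) = card A" using f(1) by (simp add: card_image)
    have cardA_lt: "card A < card B"
    proof -
      have "card (insert a A) \<le> card A0" using insert.prems finA0 by (simp add: card_mono)
      then show ?thesis using insert.hyps cardAB by simp
    qed
    show ?case
    proof (cases "\<exists>b\<in>B - f ` A. G a b")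
      case True
      then obtain b where b: "b \<in> B" "b \<notin> f ` A" "G a b" by auto
      show ?thesis
        apply (rule exI[of _ "f(a := b)"])
        using f b insert.hyps by (auto simp: inj_on_def image_iff)
    next
      case False
      have sub: "B - f ` A \<subseteq> {b\<in>B. \<not> G a b}" using False by auto
      have cd: "card (B - f`A) = card B - card A"
        using card_Diff_subset[OF finite_imageI[OF finA] f(2)] cardfA by simp
      have "card (B - f`A) \<le> card {b\<in>B. \<not> G a b}" using card_mono[OF _ sub] finB by simp
      hence c1: "real (card B) - real (card A) \<le> D" using cd badA aA0 cardA_lt by auto
      have "card (B - f`A) > 0" using cd cardA_lt by simp
      then obtain b0 where b0: "b0 \<in> B" "b0 \<notin> f ` A" by (metis Diff_iff card_gt_0_iff ex_in_conv)
      define Bad1 where "Bad1 = {a'\<in>A. \<not> G a (f a')}"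
      define Bad2 where "Bad2 = {a'\<in>A. \<not> G a' b0}"
      have "card Bad1 = card (f ` Bad1)"
        using inj_on_subset[OF f(1)] by (simp add: Bad1_def card_image)
      also have "\<dots> \<le> card {b\<in>B. \<not> G a b}"
        using f(2) finB by (intro card_mono) (auto simp: Bad1_def)
      finally have cb1: "real (card Bad1) \<le> D" using badA aA0 by force
      have "card Bad2 \<le> card {a'\<in>A0. \<not> G a' b0}"
        using AA0 finA0 by (intro card_mono) (auto simp: Bad2_def)
      hence cb2: "real (card Bad2) \<le> D" using badB b0 by force
      have "card (Bad1 \<union> Bad2) \<le> card Bad1 + card Bad2" by (rule card_Un_le)
      hence "real (card (Bad1 \<union> Bad2)) < real (card A)" using cb1 cb2 c1 cardB by linarith
      moreover have "A \<subseteq> Bad1 \<union> Bad2 \<Longrightarrow> card A \<le> card (Bad1 \<union> Bad2)"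
        using finA by (intro card_mono) (auto simp: Bad1_def Bad2_def)
      ultimately have "\<not> A \<subseteq> Bad1 \<union> Bad2" by linarith
      then obtain a' where a': "a' \<in> A" "G a (f a')" "G a' b0" by (auto simp: Bad1_def Bad2_def)
      have ane: "a \<noteq> a'" using a' insert.hyps by auto
      define h where "h = f(a := f a', a' := b0)"
      have h1: "h a' = b0" "h a = f a'" using ane by (auto simp: h_def)
      have h2: "x \<in> A - {a'} \<Longrightarrow> h x = f x" for x using insert.hyps by (auto simp: h_def)
      have inj: "inj_on h (insert a A)"
        unfolding inj_on_def
      proof (intro ballI impI)
        fix x y assume x: "x \<in> insert a A" and y: "y \<in> insert a A" and eq: "h x = h y"
        have fA: "z \<in> A \<Longrightarrow> f z \<noteq> b0" for z using b0 by auto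
        have fI: "z \<in> A \<Longrightarrow> f z = f a' \<Longrightarrow> z = a'" for z using f(1) a'(1) by (auto dest: inj_onD)
        have cls: "z \<in> insert a A \<Longrightarrow> (z = a' \<and> h z = b0) \<or> (z = a \<and> h z = f a') \<or> (z \<in> A \<and> z \<noteq> a' \<and> h z = f z)" for z
          using h1 h2[of z] by blast
        show "x = y"
          using cls[OF x] cls[OF y] eq fA[of a'] fA[of x] fA[of y] fI[of x] fI[of y] a'(1) inj_onD[OF f(1), of x y]
          by (elim disjE conjE) simp_all
      qed
      have img: "h ` insert a A \<subseteq> B" using h1 h2 f(2) b0 a'(1) by auto
      have good: "\<forall>x\<in>insert a A. G x (h x)"
      proof
        fix x assume x: "x \<in> insert a A"
        show "G x (h x)"
        proof (cases "x = a'")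
          case True then show ?thesis using h1 a' by simp
        next
          case False
          then show ?thesis using x h1 h2[of x] f(3) a' by (cases "x = a") auto
        qed
      qed
      show ?thesis using inj img good by blast
    qed
  qed
  then show ?thesis using finA0 by blast
qed
lemma greedy:
  fixes Q :: "'a \<Rightarrow> 'v set \<Rightarrow> bool"
  assumes finA0: "finite A0" and finP: "finite P"
    and hyp: "\<forall>j\<in>A0. \<forall>U. U \<subseteq> P \<and> card U \<le> r * (card A0 - 1) \<longrightarrow> (\<exists>T. T \<subseteq> P - U \<and> card T = r \<and> Q j T)"
  shows "\<exists>g. (\<forall>j\<in>A0. g j \<subseteq> P \<and> card (g j) = r \<and> Q j (g j)) \<and>
             (\<forall>j\<in>A0. \<forall>j'\<in>A0. j \<noteq> j' \<longrightarrow> g j \<inter> g j' = {})"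
proof -
  have "finite A \<Longrightarrow> A \<subseteq> A0 \<Longrightarrow> \<exists>g. (\<forall>j\<in>A. g j \<subseteq> P \<and> card (g j) = r \<and> Q j (g j)) \<and>
             (\<forall>j\<in>A. \<forall>j'\<in>A. j \<noteq> j' \<longrightarrow> g j \<inter> g j' = {})" for A
  proof (induction A rule: finite_induct)
    case empty then show ?case by auto
  next
    case (insert a A)
    then obtain g where g: "\<forall>j\<in>A. g j \<subseteq> P \<and> card (g j) = r \<and> Q j (g j)"
       "\<forall>j\<in>A. \<forall>j'\<in>A. j \<noteq> j' \<longrightarrow> g j \<inter> g j' = {}" by auto
    define U where "U = (\<Union>j\<in>A. g j)"
    have UP: "U \<subseteq> P" using g(1) by (auto simp: U_def)
    have "card U \<le> (\<Sum>j\<in>A. card (g j))" unfolding U_def by (rule card_UN_le) fact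
    also have "\<dots> = r * card A" using g(1) by simp
    also have "\<dots> \<le> r * (card A0 - 1)"
    proof -
      have "card (insert a A) \<le> card A0" using insert.prems finA0 by (simp add: card_mono)
      then have "card A \<le> card A0 - 1" using insert.hyps by simp
      then show ?thesis by simp
    qed
    finally have cU: "card U \<le> r * (card A0 - 1)" .
    have aA0: "a \<in> A0" using insert.prems by auto
    have "\<exists>T. T \<subseteq> P - U \<and> card T = r \<and> Q a T" using bspec[OF hyp aA0] UP cU by blast
    then obtain T where T: "T \<subseteq> P - U" "card T = r" "Q a T" by blast
    have c1: "\<forall>j\<in>insert a A. (g(a := T)) j \<subseteq> P \<and> card ((g(a := T)) j) = r \<and> Q j ((g(a := T)) j)"
      using g(1) T insert.hyps by auto
    have dT: "T \<inter> g x = {}" if "x \<in> A" for x using T(1) that by (auto simp: U_def)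
    have c2: "\<forall>j\<in>insert a A. \<forall>j'\<in>insert a A. j \<noteq> j' \<longrightarrow> (g(a := T)) j \<inter> (g(a := T)) j' = {}"
      using g(2) dT insert.hyps by (auto simp: Int_commute)
    show ?case using c1 c2 by blast
  qed
  then show ?thesis using finA0 by blast
qed

lemma count_bad:
  fixes h :: "'b \<Rightarrow> nat" and S \<gamma> :: real
  assumes "finite B" "(\<Sum>b\<in>B. real (h b)) \<le> S" "\<gamma> > 0"
  shows "real (card {b\<in>B. real (h b) > \<gamma>}) \<le> S / \<gamma>"
proof -
  have "real (card {b\<in>B. real (h b) > \<gamma>}) * \<gamma> = (\<Sum>b\<in>{b\<in>B. real (h b) > \<gamma>}. \<gamma>)" by simp
  also have "\<dots> \<le> (\<Sum>b\<in>{b\<in>B. real (h b) > \<gamma>}. real (h b))"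
    by (intro sum_mono) auto
  also have "\<dots> \<le> (\<Sum>b\<in>B. real (h b))"
    using assms(1) by (intro sum_mono2) auto
  finally show ?thesis using assms by (simp add: pos_le_divide_eq)
qed


lemma F_sub: "F_edges k n t \<subseteq> Pow (Xset t \<union> Nset n)"
  unfolding F_edges_def Xset_def by auto

lemma nbhd_sub: "E \<subseteq> Pow V \<Longrightarrow> nbhd k E v \<subseteq> Pow V"
  unfolding nbhd_def by auto

lemma nbhd_Inr:
  assumes "k \<ge> 1" "i \<in> {1..t+1}" "j \<in> {1..t}" "t \<le> n" "T \<subseteq> Inr ` {t+1..n}" "card T = k - 1"
     "insert (Inl i) (insert (Inr j) T) \<notin> E"
  shows "insert (Inl i) T \<in> nbhd k (F_edges k n t) (Inr j) - nbhd k E (Inr j)"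
proof -
  have finT: "finite T" using assms(5) finite_subset by blast
  have nI: "Inl i \<notin> T" using assms(5) by auto
  have nJ: "Inr j \<notin> T" using assms(3,5) by auto
  have cS: "card (insert (Inl i) T) = k" using finT nI assms(1,6) by simp
  have cE: "card (insert (Inr j) T) = k" using finT nJ assms(1,6) by simp
  have sub: "insert (Inr j) T \<subseteq> Nset n" using assms(3,4,5) by (auto simp: Nset_def)
  have meet: "insert (Inr j) T \<inter> Inr ` {1..t} \<noteq> {}" using assms(3) by auto
  have eq: "insert (Inr j) (insert (Inl i) T) = insert (Inl i) (insert (Inr j) T)" by auto
  have "insert (Inr j) (insert (Inl i) T) \<in> F_edges k n t"
    unfolding F_edges_def eq using assms(2) sub cE meet by blast
  then show ?thesis using cS finT nI nJ assms(7) eq unfolding nbhd_def by auto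
qed

lemma nbhd_Inl:
  assumes "k \<ge> 1" "i \<in> {1..t+1}" "j \<in> {1..t}" "t \<le> n" "T \<subseteq> Inr ` {t+1..n}" "card T = k - 1"
     "insert (Inl i) (insert (Inr j) T) \<notin> E"
  shows "insert (Inr j) T \<in> nbhd k (F_edges k n t) (Inl i) - nbhd k E (Inl i)"
proof -
  have finT: "finite T" using assms(5) finite_subset by blast
  have nJ: "Inr j \<notin> T" using assms(3,5) by auto
  have cE: "card (insert (Inr j) T) = k" using finT nJ assms(1,6) by simp
  have sub: "insert (Inr j) T \<subseteq> Nset n" using assms(3,4,5) by (auto simp: Nset_def)
  have meet: "insert (Inr j) T \<inter> Inr ` {1..t} \<noteq> {}" using assms(3) by auto
  have "insert (Inl i) (insert (Inr j) T) \<in> F_edges k n t"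
    unfolding F_edges_def using assms(2) sub cE meet by blast
  moreover have nI: "Inl i \<notin> insert (Inr j) T" using assms(5) by auto
  ultimately show ?thesis using cE finT assms(7) unfolding nbhd_def by auto
qed


theorem lemma4p1:
  fixes k :: nat and \<zeta> :: real
  assumes "k \<ge> 1" and "0 < \<zeta>" and "\<zeta> < 1"
  shows "\<exists>\<alpha>0 > 0. \<forall>\<alpha> n t E.
     0 < \<alpha> \<and> \<alpha> < \<alpha>0 \<and> n > 0 \<and> t > 0 \<and>
     real n \<ge> 8 * real k ^ 4 \<and> real t \<ge> real n / (2 * real k ^ 3) \<and>
     real t + 1 < (1 - \<zeta>) * real n / real k \<and>
     one_k_partite k (Xset t) (Nset n) E \<and>
     (\<forall>v \<in> Xset t \<union> Nset n. alpha_good \<alpha> k n t E v)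
     \<longrightarrow> matching_number E \<ge> t \<and>
         (matching_number E = t \<longrightarrow> E \<subseteq> F_edges k n t)"
proof -
  note k1 = assms(1)
  have kpos: "real k > 0" using k1 by simp
  define c where "c = (real k / \<zeta>) ^ (k - 1)"
  have cpos: "c > 0" unfolding c_def using kpos assms(2) by simp
  define \<alpha>0 where "\<alpha>0 = 1 / (12 * real k ^ 3 * c)"
  have a0pos: "\<alpha>0 > 0" unfolding \<alpha>0_def using cpos kpos by simp
  have main: "matching_number E \<ge> t \<and> (matching_number E = t \<longrightarrow> E \<subseteq> F_edges k n t)"
    if hyp: "0 < \<alpha> \<and> \<alpha> < \<alpha>0 \<and> n > 0 \<and> t > 0 \<and>
     real n \<ge> 8 * real k ^ 4 \<and> real t \<ge> real n / (2 * real k ^ 3) \<and>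
     real t + 1 < (1 - \<zeta>) * real n / real k \<and>
     one_k_partite k (Xset t) (Nset n) E \<and>
     (\<forall>v \<in> Xset t \<union> Nset n. alpha_good \<alpha> k n t E v)" for \<alpha> n t E
  proof -
    from hyp have apos: "0 < \<alpha>" and alt: "\<alpha> < \<alpha>0" and npos: "n > 0" and tpos: "t > 0"
      and tlow: "real t \<ge> real n / (2 * real k ^ 3)"
      and tup: "real t + 1 < (1 - \<zeta>) * real n / real k"
      and part: "one_k_partite k (Xset t) (Nset n) E"
      and good: "\<forall>v \<in> Xset t \<union> Nset n. alpha_good \<alpha> k n t E v" by auto
    have ktup: "real k * (real t + 1) < (1 - \<zeta>) * real n"
      using tup kpos by (simp add: pos_less_divide_eq mult.commute)
    have ktup2: "real k * real t + real k < real n - \<zeta> * real n"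
      using ktup by (simp add: algebra_simps)
    have ztn: "\<zeta> * real n > 0" using assms(2) npos by simp
    have tkt: "real t \<le> real k * real t" using k1 by (simp add: mult_le_cancel_right1)
    have "real k \<ge> 1" using k1 by simp
    hence tn_r: "real t + 1 < real n" using ktup2 ztn tkt by linarith
    hence tn: "t < n" by linarith
    define R :: "vert set" where "R = Inr ` {t+1..n}"
    have finR: "finite R" unfolding R_def by simp
    have cardR: "card R = n - t" unfolding R_def by (simp add: card_image)
    define Miss where "Miss i j = {T. T \<subseteq> R \<and> card T = k - 1 \<and> insert (Inl i) (insert (Inr j) T) \<notin> E}" for i j
    have finMiss: "finite (Miss i j)" for i j
      by (rule finite_subset[of _ "Pow R"]) (auto simp: Miss_def finR)
    define \<gamma> where "\<gamma> = real n ^ (k - 1) / (2 * c)"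
    have gpos: "\<gamma> > 0" unfolding \<gamma>_def using npos cpos by simp
    define D where "D = \<alpha> * real n ^ k / \<gamma>"
    have Deq: "D = 2 * \<alpha> * c * real n"
    proof -
      have "real n ^ k = real n * real n ^ (k - 1)" using k1 by (metis Suc_diff_le diff_Suc_1 power_Suc)
      then show ?thesis unfolding D_def \<gamma>_def using npos cpos by (simp add: field_simps)
    qed
    have D3: "3 * D < real t"
    proof -
      have "3 * D = 6 * \<alpha> * c * real n" using Deq by simp
      also have "\<dots> < 6 * \<alpha>0 * c * real n" using alt cpos npos by simp
      also have "\<dots> = real n / (2 * real k ^ 3)" unfolding \<alpha>0_def using cpos kpos by (simp add: field_simps)
      finally show ?thesis using tlow by linarith
    qed
    have XN: "finite (Xset t \<union> Nset n)" by (simp add: Xset_def Nset_def)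
    have finNb: "finite (nbhd k (F_edges k n t) v)" for v
      using finite_subset[OF nbhd_sub[OF F_sub]] XN by (meson finite_Pow_iff)
    have F1: "(\<Sum>i\<in>{1..t+1}. real (card (Miss i j))) \<le> \<alpha> * real n ^ k" if j: "j \<in> {1..t}" for j
    proof -
      define Sg where "Sg = (SIGMA i:{1..t+1}. Miss i j)"
      define \<phi> where "\<phi> = (\<lambda>(i::nat, T::vert set). insert (Inl i) T)"
      have sub: "\<phi> ` Sg \<subseteq> nbhd k (F_edges k n t) (Inr j) - nbhd k E (Inr j)"
      proof
        fix S assume "S \<in> \<phi> ` Sg"
        then obtain i T where iT: "i \<in> {1..t+1}" "T \<in> Miss i j" "S = insert (Inl i) T"
          unfolding Sg_def \<phi>_def by auto
        show "S \<in> nbhd k (F_edges k n t) (Inr j) - nbhd k E (Inr j)"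
          using nbhd_Inr[OF k1 iT(1) j, of n T E] iT tn unfolding Miss_def R_def by auto
      qed
      have inj: "inj_on \<phi> Sg"
      proof (rule inj_onI)
        fix p q assume p: "p \<in> Sg" and q: "q \<in> Sg" and eq: "\<phi> p = \<phi> q"
        obtain i T where pi: "p = (i, T)" "T \<subseteq> R" using p unfolding Sg_def Miss_def by auto
        obtain i' T' where qi: "q = (i', T')" "T' \<subseteq> R" using q unfolding Sg_def Miss_def by auto
        have e: "insert (Inl i) T = insert (Inl i') T'" using eq pi qi unfolding \<phi>_def by simp
        have "Inl i \<in> insert (Inl i') T'" using e by blast
        then have ii: "i = i'" using qi(2) unfolding R_def by auto
        have "Inl i \<notin> T" "Inl i \<notin> T'" using pi(2) qi(2) unfolding R_def by auto
        then have "T = T'" using e ii insert_ident by metis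
        then show "p = q" using pi qi ii by simp
      qed
      have "(\<Sum>i\<in>{1..t+1}. real (card (Miss i j))) = real (card Sg)"
        unfolding Sg_def using finMiss by (simp add: card_SigmaI)
      also have "\<dots> = real (card (\<phi> ` Sg))" using inj by (simp add: card_image)
      also have "\<dots> \<le> real (card (nbhd k (F_edges k n t) (Inr j) - nbhd k E (Inr j)))"
        using sub finNb by (simp add: card_mono)
      also have "\<dots> \<le> \<alpha> * real n ^ k"
      proof -
        have "Inr j \<in> Xset t \<union> Nset n" using j tn by (auto simp: Nset_def)
        then show ?thesis using good unfolding alpha_good_def by blast
      qed
      finally show ?thesis .
    qed
    have F2: "(\<Sum>j\<in>{1..t}. real (card (Miss i j))) \<le> \<alpha> * real n ^ k" if i: "i \<in> {1..t+1}" for i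
    proof -
      define Sg where "Sg = (SIGMA j:{1..t}. Miss i j)"
      define \<phi> where "\<phi> = (\<lambda>(j::nat, T::vert set). insert (Inr j) T)"
      have sub: "\<phi> ` Sg \<subseteq> nbhd k (F_edges k n t) (Inl i) - nbhd k E (Inl i)"
      proof
        fix S assume "S \<in> \<phi> ` Sg"
        then obtain j T where jT: "j \<in> {1..t}" "T \<in> Miss i j" "S = insert (Inr j) T"
          unfolding Sg_def \<phi>_def by auto
        show "S \<in> nbhd k (F_edges k n t) (Inl i) - nbhd k E (Inl i)"
          using nbhd_Inl[OF k1 i jT(1), of n T E] jT tn unfolding Miss_def R_def by auto
      qed
      have inj: "inj_on \<phi> Sg"
      proof (rule inj_onI)
        fix p q assume p: "p \<in> Sg" and q: "q \<in> Sg" and eq: "\<phi> p = \<phi> q"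
        obtain j T where pj: "p = (j, T)" "T \<subseteq> R" "j \<in> {1..t}" using p unfolding Sg_def Miss_def by auto
        obtain j' T' where qj: "q = (j', T')" "T' \<subseteq> R" "j' \<in> {1..t}" using q unfolding Sg_def Miss_def by auto
        have e: "insert (Inr j) T = insert (Inr j') T'" using eq pj qj unfolding \<phi>_def by simp
        have "Inr j \<in> insert (Inr j') T'" using e by blast
        moreover have "Inr j \<notin> T'" using qj(2) pj(3) unfolding R_def by auto
        ultimately have jj: "j = j'" by auto
        have "Inr j \<notin> T" "Inr j \<notin> T'" using pj(2,3) qj(2) unfolding R_def by auto
        then have "T = T'" using e jj insert_ident by metis
        then show "p = q" using pj qj jj by simp
      qed
      have "(\<Sum>j\<in>{1..t}. real (card (Miss i j))) = real (card Sg)"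
        unfolding Sg_def using finMiss by (simp add: card_SigmaI)
      also have "\<dots> = real (card (\<phi> ` Sg))" using inj by (simp add: card_image)
      also have "\<dots> \<le> real (card (nbhd k (F_edges k n t) (Inl i) - nbhd k E (Inl i)))"
        using sub finNb by (simp add: card_mono)
      also have "\<dots> \<le> \<alpha> * real n ^ k"
      proof -
        have "Inl i \<in> Xset t \<union> Nset n" using i by (auto simp: Xset_def)
        then show ?thesis using good unfolding alpha_good_def by blast
      qed
      finally show ?thesis .
    qed
    have binom: "real (card (R - Z - U) choose (k - 1)) > \<gamma>"
      if UZ: "U \<subseteq> R" "Z \<subseteq> R" "card U \<le> (k - 1) * (t - 1)" "card Z \<le> k" for U Z
    proof -
      define m where "m = card (R - Z - U)"
      have "R \<subseteq> (R - Z - U) \<union> Z \<union> U" by auto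
      then have "card R \<le> card ((R - Z - U) \<union> Z \<union> U)"
        using finR UZ by (intro card_mono) (auto intro: finite_subset)
      also have "\<dots> \<le> card (R - Z - U) + card Z + card U"
        by (metis add_le_mono card_Un_le le_refl order_trans)
      finally have c1: "n - t \<le> m + card Z + card U" using cardR m_def by simp
      have c2: "real (n - t) = real n - real t" using tn by simp
      have c3: "real ((k - 1) * (t - 1)) = (real k - 1) * (real t - 1)" using k1 tpos by (simp add: of_nat_diff)
      have "real (n - t) \<le> real m + real (card Z) + real (card U)" using c1 by linarith
      then have "real n - real t \<le> real m + real k + (real k - 1) * (real t - 1)"
        using c2 c3 UZ(3,4) by (smt (verit) of_nat_le_iff)
      then have mlow: "real m \<ge> real n - real k * real t - 1" by (simp add: algebra_simps)
      have mz: "real m > \<zeta> * real n + real k - 1" using mlow ktup2 by linarith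
      have mk: "k - 1 \<le> m" using mz ztn k1 by (simp add: of_nat_diff)
      have "(real m / real (k - 1)) ^ (k - 1) \<le> real (m choose (k - 1))"
        using binomial_ge_n_over_k_pow_k[OF mk] by simp
      moreover have "(\<zeta> * real n / real k) ^ (k - 1) \<le> (real m / real (k - 1)) ^ (k - 1)"
      proof (cases "k = 1")
        case True then show ?thesis by simp
      next
        case False
        then have k2: "real (k - 1) \<ge> 1" "real (k - 1) < real k" using k1 by (simp_all add: of_nat_diff)
        have "\<zeta> * real n / real k \<le> real m / real k" using mz kpos k1 by (simp add: divide_right_mono)
        also have "\<dots> \<le> real m / real (k - 1)" using k2 by (intro divide_left_mono) auto
        finally show ?thesis using ztn kpos by (intro power_mono) auto
      qed
      moreover have "(\<zeta> * real n / real k) ^ (k - 1) = real n ^ (k - 1) / c"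
        unfolding c_def using assms(2) kpos by (simp add: power_divide power_mult_distrib field_simps)
      moreover have "real n ^ (k - 1) / c = 2 * \<gamma>" unfolding \<gamma>_def using cpos by simp
      ultimately show ?thesis using gpos unfolding m_def by linarith
    qed
    have construct: "\<exists>M. matching E M \<and> card M = t \<and> (\<forall>e\<in>M. e \<inter> Z = {} \<and> (\<forall>i. Inl i \<in> e \<longrightarrow> i \<in> B))"
      if B: "B \<subseteq> {1..t+1}" "t \<le> card B" and Z: "Z \<subseteq> R" "card Z \<le> k" for B Z
    proof -
      define G where "G j i \<longleftrightarrow> real (card (Miss i j)) \<le> \<gamma>" for j i
      have finB: "finite B" using B(1) finite_subset by blast
      have "\<exists>f. inj_on f {1..t} \<and> f ` {1..t} \<subseteq> B \<and> (\<forall>j\<in>{1..t}. G j (f j))"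
      proof (rule pairing[where D = D])
        show "finite {1..t}" by simp
        show "finite B" by fact
        show "card {1..t} \<le> card B" using B by simp
        show "real (card B) > 3 * D" using D3 B(2) by linarith
        show "\<forall>a\<in>{1..t}. real (card {b\<in>B. \<not> G a b}) \<le> D"
        proof
          fix j assume j: "j \<in> {1..t}"
          have "(\<Sum>i\<in>B. real (card (Miss i j))) \<le> (\<Sum>i\<in>{1..t+1}. real (card (Miss i j)))"
            using B(1) by (intro sum_mono2) auto
          also have "\<dots> \<le> \<alpha> * real n ^ k" using F1[OF j] .
          finally have "real (card {i\<in>B. real (card (Miss i j)) > \<gamma>}) \<le> \<alpha> * real n ^ k / \<gamma>"
            using count_bad[OF finB _ gpos, of "\<lambda>i. card (Miss i j)"] by blast
          then show "real (card {b\<in>B. \<not> G j b}) \<le> D" unfolding G_def D_def by (simp add: not_le)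
        qed
        show "\<forall>b\<in>B. real (card {a\<in>{1..t}. \<not> G a b}) \<le> D"
        proof
          fix i assume i: "i \<in> B"
          have "real (card {j\<in>{1..t}. real (card (Miss i j)) > \<gamma>}) \<le> \<alpha> * real n ^ k / \<gamma>"
            using count_bad[OF _ F2 gpos, of i] i B(1) by auto
          then show "real (card {a\<in>{1..t}. \<not> G a i}) \<le> D" unfolding G_def D_def by (simp add: not_le)
        qed
      qed
      then obtain f where f: "inj_on f {1..t}" "f ` {1..t} \<subseteq> B" "\<forall>j\<in>{1..t}. G j (f j)" by blast
      have "\<exists>g. (\<forall>j\<in>{1..t}. g j \<subseteq> R - Z \<and> card (g j) = k - 1 \<and> insert (Inl (f j)) (insert (Inr j) (g j)) \<in> E) \<and>
             (\<forall>j\<in>{1..t}. \<forall>j'\<in>{1..t}. j \<noteq> j' \<longrightarrow> g j \<inter> g j' = {})"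
      proof (rule greedy[where Q = "\<lambda>j T. insert (Inl (f j)) (insert (Inr j) T) \<in> E"])
        show "finite {1..t}" by simp
        show "finite (R - Z)" using finR by simp
        show "\<forall>j\<in>{1..t}. \<forall>U. U \<subseteq> R - Z \<and> card U \<le> (k - 1) * (card {1..t} - 1) \<longrightarrow>
          (\<exists>T. T \<subseteq> R - Z - U \<and> card T = k - 1 \<and> insert (Inl (f j)) (insert (Inr j) T) \<in> E)"
        proof (intro ballI allI impI)
          fix j U assume j: "j \<in> {1..t}" and U: "U \<subseteq> R - Z \<and> card U \<le> (k - 1) * (card {1..t} - 1)"
          define C where "C = {T. T \<subseteq> R - Z - U \<and> card T = k - 1}"
          have "card C = card (R - Z - U) choose (k - 1)" unfolding C_def
            using finR by (intro n_subsets) simp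
          moreover have "U \<subseteq> R" using U by blast
          ultimately have cC: "real (card C) > \<gamma>" using binom[of U Z] U Z by simp
          have cM: "real (card (Miss (f j) j)) \<le> \<gamma>" using f(3) j unfolding G_def by blast
          show "\<exists>T. T \<subseteq> R - Z - U \<and> card T = k - 1 \<and> insert (Inl (f j)) (insert (Inr j) T) \<in> E"
          proof (rule ccontr)
            assume "\<not> ?thesis"
            then have "C \<subseteq> Miss (f j) j" unfolding C_def Miss_def by auto
            then have "card C \<le> card (Miss (f j) j)" using finMiss by (intro card_mono)
            then show False using cC cM by linarith
          qed
        qed
      qed
      then obtain g where g: "\<forall>j\<in>{1..t}. g j \<subseteq> R - Z \<and> card (g j) = k - 1 \<and> insert (Inl (f j)) (insert (Inr j) (g j)) \<in> E"
         "\<forall>j\<in>{1..t}. \<forall>j'\<in>{1..t}. j \<noteq> j' \<longrightarrow> g j \<inter> g j' = {}" by blast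
      define \<phi> where "\<phi> j = insert (Inl (f j)) (insert (Inr j) (g j))" for j
      have gR: "\<And>j x. j \<in> {1..t} \<Longrightarrow> x \<in> g j \<Longrightarrow> x \<in> Inr ` {t+1..n} \<and> x \<notin> Z"
        using g(1) unfolding R_def by blast
      have nJ: "\<And>j j'. j \<in> {1..t} \<Longrightarrow> j' \<in> {1..t} \<Longrightarrow> Inr j \<notin> g j'"
        using gR by fastforce
      have nI: "\<And>j i. j \<in> {1..t} \<Longrightarrow> Inl i \<notin> g j" using gR by fastforce
      have injphi: "inj_on \<phi> {1..t}"
      proof (rule inj_onI)
        fix j j' assume j: "j \<in> {1..t}" and j': "j' \<in> {1..t}" and eq: "\<phi> j = \<phi> j'"
        have "Inr j \<in> \<phi> j'" using eq unfolding \<phi>_def by auto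
        then show "j = j'" using nJ[OF j j'] unfolding \<phi>_def by auto
      qed
      define M where "M = \<phi> ` {1..t}"
      have cardM: "card M = t" unfolding M_def using injphi by (simp add: card_image)
      have ME: "M \<subseteq> E" using g(1) unfolding M_def \<phi>_def by auto
      have disj: "\<phi> j \<inter> \<phi> j' = {}" if j: "j \<in> {1..t}" and j': "j' \<in> {1..t}" and ne: "j \<noteq> j'" for j j'
      proof -
        have "f j \<noteq> f j'" using f(1) j j' ne by (meson inj_onD)
        then show ?thesis using ne g(2) j j' nJ[OF j j'] nJ[OF j' j] nI[OF j] nI[OF j'] unfolding \<phi>_def by auto
      qed
      have "matching E M"
        unfolding matching_def
      proof (intro conjI ballI impI)
        show "M \<subseteq> E" by fact
        show "finite M" unfolding M_def by simp
        fix e e' assume "e \<in> M" "e' \<in> M" "e \<noteq> e'"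
        then show "e \<inter> e' = {}" unfolding M_def using disj by blast
      qed
      moreover have "\<forall>e\<in>M. e \<inter> Z = {} \<and> (\<forall>i. Inl i \<in> e \<longrightarrow> i \<in> B)"
      proof
        fix e assume "e \<in> M"
        then obtain j where j: "j \<in> {1..t}" "e = \<phi> j" unfolding M_def by auto
        have "Inl (f j) \<notin> Z" "Inr j \<notin> Z" using Z(1) j(1) unfolding R_def by auto
        then have "e \<inter> Z = {}" using j gR unfolding \<phi>_def by auto
        moreover have "\<forall>i. Inl i \<in> e \<longrightarrow> i \<in> B" using j nI f(2) unfolding \<phi>_def by auto
        ultimately show "e \<inter> Z = {} \<and> (\<forall>i. Inl i \<in> e \<longrightarrow> i \<in> B)" by blast
      qed
      ultimately show ?thesis using cardM by blast
    qed
    have Esub: "E \<subseteq> Pow (Xset t \<union> Nset n)" using part unfolding one_k_partite_def by auto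
    have finE: "finite E" using Esub XN by (meson finite_Pow_iff finite_subset)
    have mn: "card M \<le> matching_number E" if "matching E M" for M
    proof -
      have "{card M | M. matching E M} \<subseteq> card ` Pow E" unfolding matching_def by auto
      then have "finite {card M | M. matching E M}" using finE by (meson finite_Pow_iff finite_imageI finite_subset)
      then show ?thesis unfolding matching_number_def using that by (intro Max_ge) auto
    qed
    have partA: "t \<le> matching_number E"
    proof -
      obtain M where "matching E M" "card M = t" using construct[of "{1..t+1}" "{}"] by auto
      then show ?thesis using mn by metis
    qed
    have partB: "E \<subseteq> F_edges k n t" if eqt: "matching_number E = t"
    proof (rule ccontr)
      assume "\<not> E \<subseteq> F_edges k n t"
      then obtain e where eE: "e \<in> E" and eF: "e \<notin> F_edges k n t" by blast
      have ep: "e \<subseteq> Xset t \<union> Nset n" "card (e \<inter> Xset t) = 1" "card (e \<inter> Nset n) = k" "finite e"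
        using part eE unfolding one_k_partite_def by auto
      obtain x where x: "e \<inter> Xset t = {x}" using ep(2) by (rule card_1_singletonE)
      have "x \<in> Xset t" using x by blast
      then obtain a where a: "a \<in> {1..t+1}" "x = Inl a" unfolding Xset_def by blast
      define S0 where "S0 = e \<inter> Nset n"
      have eS: "e = insert (Inl a) S0" using ep(1) x a unfolding S0_def by auto
      have S0N: "S0 \<subseteq> Nset n" and cS0: "card S0 = k" using ep(3) unfolding S0_def by auto
      have S0t: "S0 \<inter> Inr ` {1..t} = {}"
      proof (rule ccontr)
        assume "S0 \<inter> Inr ` {1..t} \<noteq> {}"
        then have "e \<in> F_edges k n t" unfolding F_edges_def using eS a S0N cS0 by blast
        then show False using eF by simp
      qed
      have S0R: "S0 \<subseteq> R"
      proof
        fix y assume y: "y \<in> S0"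
        then obtain m where m: "m \<in> {1..n}" "y = Inr m" using S0N unfolding Nset_def by auto
        have "m \<notin> {1..t}" using S0t y m by auto
        then show "y \<in> R" using m unfolding R_def by auto
      qed
      have cB: "card ({1..t+1} - {a}) = t" using a by simp
      obtain M where M: "matching E M" "card M = t"
        "\<forall>e\<in>M. e \<inter> S0 = {} \<and> (\<forall>i. Inl i \<in> e \<longrightarrow> i \<in> {1..t+1} - {a})"
        using construct[of "{1..t+1} - {a}" S0] cB S0R cS0 by auto
      have eM: "e \<notin> M" using M(3) eS by auto
      have "matching E (insert e M)"
        unfolding matching_def
      proof (intro conjI ballI impI)
        show "insert e M \<subseteq> E" using M(1) eE unfolding matching_def by auto
        show "finite (insert e M)" using M(1) unfolding matching_def by auto
        fix e1 e2 assume e1: "e1 \<in> insert e M" and e2: "e2 \<in> insert e M" and ne: "e1 \<noteq> e2"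
        have de: "e \<inter> e' = {}" if "e' \<in> M" for e'
          using M(3) that eS by auto
        consider "e1 = e" "e2 \<in> M" | "e2 = e" "e1 \<in> M" | "e1 \<in> M" "e2 \<in> M" using e1 e2 ne by auto
        then show "e1 \<inter> e2 = {}"
        proof cases
          case 1 then show ?thesis using de by blast
        next
          case 2 then show ?thesis using de by blast
        next
          case 3 then show ?thesis using ne M(1) unfolding matching_def by blast
        qed
      qed
      then have "card (insert e M) \<le> matching_number E" by (rule mn)
      moreover have "card (insert e M) = t + 1" using eM M(1,2) unfolding matching_def by simp
      ultimately show False using eqt by simp
    qed
    show ?thesis using partA partB by blast
  qed
  show ?thesis using a0pos main by blast
qed

end
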